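(* Let $x \in \mathbb{R}^n$ and let $(B_i)_{i \geq 1}$ be a sequence of open balls in $\mathbb{R}^n$ with unbounded radii such that $x \in B_i$ for every $i$. Then $B = \bigcup_{i \geq 1} B_i$ contains an open halfspace $H$ with $x \in \mathrm{bd}(H)$.
   Context: $\mathrm{bd}(X) = \overline{X} \cap \overline{\mathbb{R}^n \setminus X}$ denotes the topological boundary of $X \subseteq \mathbb{R}^n$. An open halfspace is a set of the form $\{y \in \mathbb{R}^n : a\cdot y > b\}$ with $a \neq 0$. *)

theory Defs
  imports "HOL-Analysis.Analysis"
begin

end

theory Submission
  imports Defs
begin

lemma key:
  fixes x y u :: "'a::real_inner"
  assumes nu: "norm u = 1" and d0: "0 \<le> d" and dR: "d < R"
    and ud: "u \<bullet> (y - x) > \<delta> / 2" and dl: "\<delta> > 0"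
    and R1: "R > 2 * norm (y - x)" and R2: "R * \<delta> / 4 > (norm (y - x))^2"
  shows "dist y (x + d *\<^sub>R u) < R"
proof (cases "d < R / 2")
  case True
  have "dist y (x + d *\<^sub>R u) = norm ((y - x) - d *\<^sub>R u)"
    by (simp add: dist_norm algebra_simps)
  also have "\<dots> \<le> norm (y - x) + norm (d *\<^sub>R u)" by (rule norm_triangle_ineq4)
  also have "\<dots> = norm (y - x) + d" using nu d0 by simp
  finally show ?thesis using True R1 by linarith
next
  case False
  have R0: "R > 0" using dR d0 by linarith
  have eq: "(dist y (x + d *\<^sub>R u))^2 = (norm (y - x))^2 - 2 * d * (u \<bullet> (y - x)) + d^2"
  proof -
    have "dist y (x + d *\<^sub>R u) = norm ((y - x) - d *\<^sub>R u)"
      by (simp add: dist_norm algebra_simps)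
    then have "(dist y (x + d *\<^sub>R u))^2 = (y - x - d *\<^sub>R u) \<bullet> (y - x - d *\<^sub>R u)"
      by (simp add: power2_norm_eq_inner)
    also have "\<dots> = (y - x) \<bullet> (y - x) - 2 * d * (u \<bullet> (y - x)) + d^2 * (u \<bullet> u)"
      by (simp add: inner_diff_left inner_diff_right inner_commute algebra_simps power2_eq_square)
    also have "\<dots> = (norm (y - x))^2 - 2 * d * (u \<bullet> (y - x)) + d^2"
      using nu by (simp add: power2_norm_eq_inner[symmetric] norm_eq_1[symmetric])
    finally show ?thesis .
  qed
  have "2 * d * (u \<bullet> (y - x)) \<ge> 2 * d * (\<delta> / 2)"
    using ud d0 by (intro mult_left_mono) auto
  moreover have "2 * d * (\<delta> / 2) \<ge> R * \<delta> / 2" using False dl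
    by (simp add: mult_right_mono)
  moreover have "d^2 < R^2" using d0 dR by (simp add: power_strict_mono)
  moreover have "R * \<delta> > 0" using R0 dl by simp
  ultimately have "(dist y (x + d *\<^sub>R u))^2 < R^2" using eq R2
    by linarith
  then show ?thesis using R0 by (meson power_less_imp_less_base less_imp_le)
qed

theorem lemma1:
  fixes x :: "real ^ 'n" and c :: "nat \<Rightarrow> real ^ 'n" and r :: "nat \<Rightarrow> real"
  assumes pos: "\<And>i. i \<ge> 1 \<Longrightarrow> r i > 0"
    and unbdd: "\<And>M. \<exists>i\<ge>1. r i > M"
    and mem: "\<And>i. i \<ge> 1 \<Longrightarrow> x \<in> ball (c i) (r i)"
  shows "\<exists>a b. a \<noteq> 0 \<and> {y. a \<bullet> y > b} \<subseteq> (\<Union>i\<in>{1..}. ball (c i) (r i))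
           \<and> x \<in> frontier {y. a \<bullet> y > b}"
proof -
  have "\<forall>k::nat. \<exists>i. i \<ge> 1 \<and> r i > real k" using unbdd by blast
  then obtain s where s: "\<And>k. s k \<ge> 1 \<and> r (s k) > real k"
    by metis
  obtain e :: "real ^ 'n" where e: "norm e = 1"
    using norm_axis_1 by blast
  define dir where "dir v = (if v = x then e else (1 / norm (v - x)) *\<^sub>R (v - x))" for v
  have dirn: "norm (dir v) = 1" for v using e by (simp add: dir_def)
  have dirc: "v = x + norm (v - x) *\<^sub>R dir v" for v
    by (simp add: dir_def)
  define f where "f k = dir (c (s k))" for k
  have "seq_compact (sphere (0::real ^ 'n) 1)"
    by (rule compact_imp_seq_compact) (rule compact_sphere)
  moreover have "\<forall>k. f k \<in> sphere 0 1" using dirn by (simp add: f_def)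
  ultimately obtain u \<sigma> where u: "u \<in> sphere 0 1" and sm: "strict_mono \<sigma>"
    and lim: "(f \<circ> \<sigma>) \<longlonglongrightarrow> u"
    by (rule seq_compactE)
  have u0: "u \<noteq> 0" using u by auto
  have sub: "{y. u \<bullet> y > u \<bullet> x} \<subseteq> (\<Union>i\<in>{1..}. ball (c i) (r i))"
  proof
    fix y assume "y \<in> {y. u \<bullet> y > u \<bullet> x}"
    then have dpos: "u \<bullet> (y - x) > 0" by (simp add: inner_diff_right)
    define \<delta> where "\<delta> = u \<bullet> (y - x)"
    have "((\<lambda>k. (f \<circ> \<sigma>) k \<bullet> (y - x)) \<longlonglongrightarrow> u \<bullet> (y - x))"
      by (intro tendsto_intros lim)
    then have ev1: "\<forall>\<^sub>F k in sequentially. (f \<circ> \<sigma>) k \<bullet> (y - x) > \<delta> / 2"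
      using dpos unfolding \<delta>_def by (intro order_tendstoD) auto
    define M where "M = max (2 * norm (y - x)) (4 * (norm (y - x))^2 / \<delta>)"
    have ev2: "\<forall>\<^sub>F k in sequentially. real k > M"
    proof -
      obtain n :: nat where n: "M \<le> real n" using real_arch_simple[of M] by blast
      show ?thesis
        by (rule eventually_gt_at_top[of n, THEN eventually_mono]) (use n in auto)
    qed
    from eventually_happens[OF eventually_conj[OF ev1 ev2]] obtain k where
      k1: "(f \<circ> \<sigma>) k \<bullet> (y - x) > \<delta> / 2" and k2: "real k > M"
      by auto
    define i where "i = s (\<sigma> k)"
    have i1: "i \<ge> 1" using s by (simp add: i_def)
    have "real k \<le> real (\<sigma> k)" using seq_suble[OF sm, of k] by simp
    then have ri: "r i > M" using s[of "\<sigma> k"] k2 unfolding i_def by linarith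
    have "dist y (x + norm (c i - x) *\<^sub>R dir (c i)) < r i"
    proof (rule key)
      show "norm (dir (c i)) = 1" by (rule dirn)
      show "0 \<le> norm (c i - x)" by simp
      show "norm (c i - x) < r i" using mem[OF i1] by (simp add: dist_norm norm_minus_commute)
      show "dir (c i) \<bullet> (y - x) > \<delta> / 2" using k1 by (simp add: f_def i_def)
      show "\<delta> > 0" using dpos \<delta>_def by simp
      show "r i > 2 * norm (y - x)" using ri by (simp add: M_def)
      have "4 * (norm (y - x))^2 / \<delta> < r i" using ri by (simp add: M_def)
      then show "r i * \<delta> / 4 > (norm (y - x))^2" using dpos \<delta>_def
        by (simp add: field_simps)
    qed
    then have "y \<in> ball (c i) (r i)" using dirc[of "c i"] by (simp add: dist_commute)
    then show "y \<in> (\<Union>i\<in>{1..}. ball (c i) (r i))" using i1 by blast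
  qed
  have "x \<in> frontier {y. u \<bullet> y > u \<bullet> x}"
    using u0 by (simp add: frontier_halfspace_gt)
  then show ?thesis using u0 sub by blast
qed

end
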